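(* Let $\mathbf{S}$ be a strong quasi-Wajsberg* algebra. Then there exist a Wajsberg* algebra $\mathbf{M}$ and a flat strong quasi-Wajsberg* algebra $\mathbf{FW^*}$ such that $\mathbf{S}$ can be embedded (by an injective homomorphism) into the direct product $\mathbf{M}\times\mathbf{FW^*}$.
   Context: A quasi-Wajsberg* algebra is an algebra $\langle W;\to,\neg,{}^+,{}^-,1\rangle$ of type $\langle 2,1,1,1,0\rangle$ (${}^+,{}^-$ bind more tightly than $\neg$, which binds more tightly than $\to$) such that for all $x,y,z$: (1) $x\to y=\neg y\to\neg x$; (2) $(x\to 1)\to((y\to 1)\to z)=(y\to 1)\to((x\to 1)\to z)$; (3) $(1\to x)\to 1=1$; (4) $(z\to z)\to(x\to y)=x\to y$; (5) $(1\to 1)\to x^{+}=((1\to 1)\to x)^{+}=(x\to 1)\to 1$ and $(1\to 1)\to x^{-}=((1\to 1)\to x)^{-}=(x\to\neg 1)\to\neg 1$; (6) $x\to y=(y^{+}\to x^{-})\to(x^{+}\to y^{-})$; (7) $\neg(x\to y)=y\to x$; (8) $\neg\neg x=x$; (9) $(x\to(\neg x\to y))^{+}=x^{+}\to(\neg x^{+}\to y^{+})$; (10) $x\vee y=y\vee x$; (11) $x\vee(y\vee z)=(x\vee y)\vee z$; (12) $x\to(y\vee z)=(x\to y)\vee(x\to z)$; where $x\vee y:=((x^{+}\to y^{+})^{+}\to(\neg x)^{-})\to((y^{-}\to x^{-})^{-}\to x^{-})$. It is strong if $x^+=(1\to 1)\to x^+$ and $x^-=(1\to 1)\to x^-$ for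 all $x$, and flat if $1\to 1=1$. A Wajsberg* algebra is an algebra $\langle M;\to,\neg,1\rangle$ of type $\langle 2,1,0\rangle$ such that, with $x^+:=(x\to 1)\to 1$, $x^-:=(x\to\neg 1)\to\neg 1$ and $\vee$ defined by the same formula, for all $x,y,z$: $x\to y=\neg y\to\neg x$; $(x\to 1)\to((y\to 1)\to z)=(y\to 1)\to((x\to 1)\to z)$; $(1\to x)\to 1=1$; $(y\to y)\to x=x$; $x\to y=(y^+\to x^-)\to(x^+\to y^-)$; $\neg(x\to y)=y\to x$; $\neg\neg x=x$; $(x\to(\neg x\to y))^+=x^+\to(\neg x^+\to y^+)$; $x\vee y=y\vee x$; $x\vee(y\vee z)=(x\vee y)\vee z$; $x\to(y\vee z)=(x\to y)\vee(x\to z)$. A Wajsberg* algebra is regarded as an algebra in the language $\langle\to,\neg,{}^+,{}^-,1\rangle$ with these defined ${}^+,{}^-$; direct products have coordinatewise operations and homomorphisms preserve $\to,\neg,{}^+,{}^-,1$. *)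

theory Defs
  imports Main
begin

text \<open>Algebras of type (2,1,1,1,0) in the language (\<rightarrow>, \<not>, +, -, 1), given by a carrier
  set and operations (only their behaviour on the carrier matters).\<close>

record 'a qalg =
  car :: "'a set"
  imp :: "'a \<Rightarrow> 'a \<Rightarrow> 'a"
  ng  :: "'a \<Rightarrow> 'a"
  pl  :: "'a \<Rightarrow> 'a"
  mi  :: "'a \<Rightarrow> 'a"
  unit :: "'a"

definition jn :: "'a qalg \<Rightarrow> 'a \<Rightarrow> 'a \<Rightarrow> 'a" where
  "jn A x y =
     imp A (imp A (pl A (imp A (pl A x) (pl A y))) (mi A (ng A x)))
           (imp A (mi A (imp A (mi A y) (mi A x))) (mi A x))"

definition closed_alg :: "'a qalg \<Rightarrow> bool" where
  "closed_alg A \<longleftrightarrow> unit A \<in> car A \<and>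
     (\<forall>x\<in>car A. \<forall>y\<in>car A. imp A x y \<in> car A) \<and>
     (\<forall>x\<in>car A. ng A x \<in> car A \<and> pl A x \<in> car A \<and> mi A x \<in> car A)"

definition quasi_wajsberg_star :: "'a qalg \<Rightarrow> bool" where
  "quasi_wajsberg_star A \<longleftrightarrow> closed_alg A \<and>
   (let i = imp A; n = ng A; p = pl A; m = mi A; e = unit A; j = jn A in
   (\<forall>x\<in>car A. \<forall>y\<in>car A. \<forall>z\<in>car A.
      i x y = i (n y) (n x) \<and>
      i (i x e) (i (i y e) z) = i (i y e) (i (i x e) z) \<and>
      i (i e x) e = e \<and>
      i (i z z) (i x y) = i x y \<and>
      i (i e e) (p x) = p (i (i e e) x) \<and> p (i (i e e) x) = i (i x e) e \<and>
      i (i e e) (m x) = m (i (i e e) x) \<and> m (i (i e e) x) = i (i x (n e)) (n e) \<and>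
      i x y = i (i (p y) (m x)) (i (p x) (m y)) \<and>
      n (i x y) = i y x \<and>
      n (n x) = x \<and>
      p (i x (i (n x) y)) = i (p x) (i (n (p x)) (p y)) \<and>
      j x y = j y x \<and>
      j x (j y z) = j (j x y) z \<and>
      i x (j y z) = j (i x y) (i x z)))"

definition strong_qws :: "'a qalg \<Rightarrow> bool" where
  "strong_qws A \<longleftrightarrow> quasi_wajsberg_star A \<and>
     (\<forall>x\<in>car A. pl A x = imp A (imp A (unit A) (unit A)) (pl A x) \<and>
                mi A x = imp A (imp A (unit A) (unit A)) (mi A x))"

definition flat_qws :: "'a qalg \<Rightarrow> bool" where
  "flat_qws A \<longleftrightarrow> quasi_wajsberg_star A \<and> imp A (unit A) (unit A) = unit A"

text \<open>Wajsberg* algebra, regarded in the language (\<rightarrow>, \<not>, +, -, 1) with the defined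
  operations x^+ = (x \<rightarrow> 1) \<rightarrow> 1 and x^- = (x \<rightarrow> \<not>1) \<rightarrow> \<not>1.\<close>

definition wajsberg_star :: "'a qalg \<Rightarrow> bool" where
  "wajsberg_star A \<longleftrightarrow> closed_alg A \<and>
   (let i = imp A; n = ng A; p = pl A; m = mi A; e = unit A; j = jn A in
   (\<forall>x\<in>car A. p x = i (i x e) e \<and> m x = i (i x (n e)) (n e)) \<and>
   (\<forall>x\<in>car A. \<forall>y\<in>car A. \<forall>z\<in>car A.
      i x y = i (n y) (n x) \<and>
      i (i x e) (i (i y e) z) = i (i y e) (i (i x e) z) \<and>
      i (i e x) e = e \<and>
      i (i y y) x = x \<and>
      i x y = i (i (p y) (m x)) (i (p x) (m y)) \<and>
      n (i x y) = i y x \<and>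
      n (n x) = x \<and>
      p (i x (i (n x) y)) = i (p x) (i (n (p x)) (p y)) \<and>
      j x y = j y x \<and>
      j x (j y z) = j (j x y) z \<and>
      i x (j y z) = j (i x y) (i x z)))"

definition prod_alg :: "'a qalg \<Rightarrow> 'b qalg \<Rightarrow> ('a \<times> 'b) qalg" where
  "prod_alg A B = \<lparr> car = car A \<times> car B,
     imp = (\<lambda>(a,b) (c,d). (imp A a c, imp B b d)),
     ng = (\<lambda>(a,b). (ng A a, ng B b)),
     pl = (\<lambda>(a,b). (pl A a, pl B b)),
     mi = (\<lambda>(a,b). (mi A a, mi B b)),
     unit = (unit A, unit B) \<rparr>"

definition is_hom :: "('a \<Rightarrow> 'b) \<Rightarrow> 'a qalg \<Rightarrow> 'b qalg \<Rightarrow> bool" where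
  "is_hom h A B \<longleftrightarrow> (\<forall>x\<in>car A. h x \<in> car B) \<and>
     h (unit A) = unit B \<and>
     (\<forall>x\<in>car A. \<forall>y\<in>car A. h (imp A x y) = imp B (h x) (h y)) \<and>
     (\<forall>x\<in>car A. h (ng A x) = ng B (h x) \<and> h (pl A x) = pl B (h x) \<and> h (mi A x) = mi B (h x))"

definition is_embedding :: "('a \<Rightarrow> 'b) \<Rightarrow> 'a qalg \<Rightarrow> 'b qalg \<Rightarrow> bool" where
  "is_embedding h A B \<longleftrightarrow> is_hom h A B \<and> inj_on h (car A)"

end

theory Submission
  imports Defs
begin

lemma ballI_img: "(\<And>x. x \<in> A \<Longrightarrow> P (f x)) \<Longrightarrow> \<forall>y\<in>f ` A. P y" by auto

lemma sing_eq: "({a} = {b}) = (a = b)" by auto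

context
  fixes S :: "'a qalg"
  assumes st: "strong_qws S"
begin

private lemma Q: "quasi_wajsberg_star S" using st by (simp add: strong_qws_def)

private lemma cl:
  "unit S \<in> car S"
  "x \<in> car S \<Longrightarrow> y \<in> car S \<Longrightarrow> imp S x y \<in> car S"
  "x \<in> car S \<Longrightarrow> ng S x \<in> car S"
  "x \<in> car S \<Longrightarrow> pl S x \<in> car S"
  "x \<in> car S \<Longrightarrow> mi S x \<in> car S"
  using Q by (auto simp: quasi_wajsberg_star_def closed_alg_def)

private lemma AX:
  assumes "x \<in> car S" "y \<in> car S" "z \<in> car S"
  shows
  "imp S x y = imp S (ng S y) (ng S x) \<and>
   imp S (imp S x (unit S)) (imp S (imp S y (unit S)) z) = imp S (imp S y (unit S)) (imp S (imp S x (unit S)) z) \<and>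
   imp S (imp S (unit S) x) (unit S) = unit S \<and>
   imp S (imp S z z) (imp S x y) = imp S x y \<and>
   imp S (imp S (unit S) (unit S)) (pl S x) = pl S (imp S (imp S (unit S) (unit S)) x) \<and>
   pl S (imp S (imp S (unit S) (unit S)) x) = imp S (imp S x (unit S)) (unit S) \<and>
   imp S (imp S (unit S) (unit S)) (mi S x) = mi S (imp S (imp S (unit S) (unit S)) x) \<and>
   mi S (imp S (imp S (unit S) (unit S)) x) = imp S (imp S x (ng S (unit S))) (ng S (unit S)) \<and>
   imp S x y = imp S (imp S (pl S y) (mi S x)) (imp S (pl S x) (mi S y)) \<and>
   ng S (imp S x y) = imp S y x \<and>
   ng S (ng S x) = x \<and>
   pl S (imp S x (imp S (ng S x) y)) = imp S (pl S x) (imp S (ng S (pl S x)) (pl S y)) \<and>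
   jn S x y = jn S y x \<and>
   jn S x (jn S y z) = jn S (jn S x y) z \<and>
   imp S x (jn S y z) = jn S (imp S x y) (imp S x z)"
  using Q assms unfolding quasi_wajsberg_star_def Let_def by blast

private lemma SP: "x \<in> car S \<Longrightarrow> pl S x = imp S (imp S (unit S) (unit S)) (pl S x)"
  and SM: "x \<in> car S \<Longrightarrow> mi S x = imp S (imp S (unit S) (unit S)) (mi S x)"
  using st by (auto simp: strong_qws_def)

abbreviation "cc \<equiv> imp S (unit S) (unit S)"

private lemma D1: "x \<in> car S \<Longrightarrow> y \<in> car S \<Longrightarrow> imp S cc (imp S x y) = imp S x y"
  using AX[of x y "unit S"] cl by blast

private lemma D2: "imp S cc (unit S) = unit S"
  using AX[of "unit S" "unit S" "unit S"] cl by blast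

private lemma D3: "x \<in> car S \<Longrightarrow> pl S x = imp S (imp S x (unit S)) (unit S)"
  using AX[of x x x] SP[of x] by metis

private lemma D4: "x \<in> car S \<Longrightarrow> mi S x = imp S (imp S x (ng S (unit S))) (ng S (unit S))"
  using AX[of x x x] SM[of x] by metis

private lemma D5: "x \<in> car S \<Longrightarrow> pl S (imp S cc x) = pl S x"
  using AX[of x x x] SP[of x] by metis

private lemma D6: "x \<in> car S \<Longrightarrow> mi S (imp S cc x) = mi S x"
  using AX[of x x x] SM[of x] by metis

private lemma ccin: "cc \<in> car S" using cl by blast

private lemma D7: "x \<in> car S \<Longrightarrow> y \<in> car S \<Longrightarrow> imp S (imp S cc x) (imp S cc y) = imp S x y"
proof -
  assume a: "x \<in> car S" "y \<in> car S"
  have b: "imp S cc x \<in> car S" "imp S cc y \<in> car S" using a cl ccin by auto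
  show ?thesis using AX[OF b b(1)] AX[OF a a(1)] D5 D6 a by metis
qed

private lemma D8: "ng S cc = cc"
  using AX[of "unit S" "unit S" "unit S"] cl by blast

private lemma D9: "x \<in> car S \<Longrightarrow> imp S cc (ng S x) = imp S x cc"
  using AX[of cc "ng S x" cc] AX[of x x x] D8 cl ccin by metis

private lemma D10: "x \<in> car S \<Longrightarrow> ng S (imp S cc x) = imp S x cc"
  using AX[of cc x x] ccin by blast

lemma main:
  "\<exists>(M :: 'a set qalg) (F :: 'a set qalg) h.
           wajsberg_star M \<and> strong_qws F \<and> flat_qws F \<and>
           is_embedding h S (prod_alg M F)"
proof -
  define R where "R = {x\<in>car S. imp S cc x = x}"
  define cls where "cls = (\<lambda>x. if x \<in> R then R else {x})"
  define M :: "'a set qalg" where "M = \<lparr> car = (\<lambda>x. {imp S cc x}) ` car S,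
     imp = (\<lambda>X Y. {imp S (the_elem X) (the_elem Y)}),
     ng = (\<lambda>X. {ng S (the_elem X)}),
     pl = (\<lambda>X. {pl S (the_elem X)}),
     mi = (\<lambda>X. {mi S (the_elem X)}),
     unit = {unit S} \<rparr>"
  define F :: "'a set qalg" where "F = \<lparr> car = cls ` car S,
     imp = (\<lambda>X Y. R),
     ng = (\<lambda>X. if X = R then R else {ng S (the_elem X)}),
     pl = (\<lambda>X. R),
     mi = (\<lambda>X. R),
     unit = R \<rparr>"
  define h where "h = (\<lambda>x. ({imp S cc x}, cls x))"
  have Rsub: "R \<subseteq> car S" by (auto simp: R_def)
  have Rreg: "x \<in> car S \<Longrightarrow> imp S cc x \<in> R" for x
    using D1[of cc x] cl ccin by (auto simp: R_def)
  have R1: "unit S \<in> R" using D2 cl by (auto simp: R_def)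
  have Rimp: "x \<in> car S \<Longrightarrow> y \<in> car S \<Longrightarrow> imp S x y \<in> R" for x y
    using D1 cl by (auto simp: R_def)
  have Rpl: "x \<in> car S \<Longrightarrow> pl S x \<in> R" for x
    using SP[of x] cl by (auto simp: R_def)
  have Rmi: "x \<in> car S \<Longrightarrow> mi S x \<in> R" for x
    using SM[of x] cl by (auto simp: R_def)
  have Rng: "x \<in> R \<Longrightarrow> ng S x \<in> R" for x
  proof -
    assume x: "x \<in> R"
    hence xc: "x \<in> car S" and e: "imp S cc x = x" by (auto simp: R_def)
    have "imp S cc (ng S x) = ng S x" using D9[OF xc] D10[OF xc] e by simp
    thus ?thesis using xc cl by (auto simp: R_def)
  qed
  have Rng': "x \<in> car S \<Longrightarrow> ng S x \<in> R \<Longrightarrow> x \<in> R" for x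
    using Rng[of "ng S x"] AX[of x x x] by auto
  have carM: "car M = (\<lambda>a. {a}) ` R"
  proof
    show "car M \<subseteq> (\<lambda>a. {a}) ` R" using Rreg by (auto simp: M_def)
    show "(\<lambda>a. {a}) ` R \<subseteq> car M"
    proof
      fix X assume "X \<in> (\<lambda>a. {a}) ` R"
      then obtain a where "a \<in> R" "X = {a}" by auto
      thus "X \<in> car M" unfolding M_def R_def by force
    qed
  qed
  have impM: "imp M {a} {b} = {imp S a b}" for a b by (simp add: M_def)
  have ngM: "ng M {a} = {ng S a}" for a by (simp add: M_def)
  have plM: "pl M {a} = {pl S a}" for a by (simp add: M_def)
  have miM: "mi M {a} = {mi S a}" for a by (simp add: M_def)
  have unM: "unit M = {unit S}" by (simp add: M_def)
  have jnM: "jn M {a} {b} = {jn S a b}" for a b by (simp add: M_def jn_def)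
  have core: "imp S a b = imp S (ng S b) (ng S a) \<and>
       imp S (imp S a (unit S)) (imp S (imp S b (unit S)) d) =
       imp S (imp S b (unit S)) (imp S (imp S a (unit S)) d) \<and>
       imp S (imp S (unit S) a) (unit S) = unit S \<and>
       imp S (imp S b b) a = a \<and>
       imp S a b = imp S (imp S (pl S b) (mi S a)) (imp S (pl S a) (mi S b)) \<and>
       ng S (imp S a b) = imp S b a \<and>
       ng S (ng S a) = a \<and>
       pl S (imp S a (imp S (ng S a) b)) = imp S (pl S a) (imp S (ng S (pl S a)) (pl S b)) \<and>
       jn S a b = jn S b a \<and> jn S a (jn S b d) = jn S (jn S a b) d \<and>
       imp S a (jn S b d) = jn S (imp S a b) (imp S a d)"
    if a: "a \<in> R" and b: "b \<in> R" and d: "d \<in> R" for a b d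
  proof -
      have ac: "a \<in> car S" "b \<in> car S" "d \<in> car S" using a b d Rsub by auto
      have ea: "imp S cc a = a" using a by (simp add: R_def)
      have reg: "imp S (imp S b b) a = a"
        using AX[of cc a b] ac ccin ea by metis
    show ?thesis using AX[OF ac] reg by blast
  qed
  have WM: "wajsberg_star M"
    unfolding wajsberg_star_def Let_def
  proof (intro conjI)
    show "closed_alg M"
      unfolding closed_alg_def carM unM
      using R1 Rng Rpl Rmi Rsub by (auto simp: impM ngM plM miM intro!: imageI Rimp dest: subsetD[OF Rsub])
    show "\<forall>x\<in>car M. pl M x = imp M (imp M x (unit M)) (unit M) \<and>
        mi M x = imp M (imp M x (ng M (unit M))) (ng M (unit M))"
      unfolding carM unM using D3 D4 Rsub by (auto simp: impM ngM plM miM)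
    show "\<forall>x\<in>car M. \<forall>y\<in>car M. \<forall>z\<in>car M.
       imp M x y = imp M (ng M y) (ng M x) \<and>
       imp M (imp M x (unit M)) (imp M (imp M y (unit M)) z) =
       imp M (imp M y (unit M)) (imp M (imp M x (unit M)) z) \<and>
       imp M (imp M (unit M) x) (unit M) = unit M \<and>
       imp M (imp M y y) x = x \<and>
       imp M x y = imp M (imp M (pl M y) (mi M x)) (imp M (pl M x) (mi M y)) \<and>
       ng M (imp M x y) = imp M y x \<and>
       ng M (ng M x) = x \<and>
       pl M (imp M x (imp M (ng M x) y)) = imp M (pl M x) (imp M (ng M (pl M x)) (pl M y)) \<and>
       jn M x y = jn M y x \<and> jn M x (jn M y z) = jn M (jn M x y) z \<and>
       imp M x (jn M y z) = jn M (imp M x y) (imp M x z)"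
      unfolding carM unM
      apply (intro ballI_img)
      apply (simp only: impM ngM plM miM jnM sing_eq)
      apply (rule core)
      apply assumption+
      done
  qed
  have carF: "car F = cls ` car S" by (simp add: F_def)
  have impF: "imp F X Y = R" for X Y by (simp add: F_def)
  have plF: "pl F X = R" for X by (simp add: F_def)
  have miF: "mi F X = R" for X by (simp add: F_def)
  have unF: "unit F = R" by (simp add: F_def)
  have ngR: "ng F R = R" by (simp add: F_def)
  have jnF: "jn F X Y = R" for X Y by (simp add: jn_def impF)
  have ngcls: "x \<in> car S \<Longrightarrow> ng F (cls x) = cls (ng S x)" for x
  proof -
    assume xc: "x \<in> car S"
    show ?thesis
    proof (cases "x \<in> R")
      case True thus ?thesis using Rng by (simp add: cls_def F_def)
    next
      case False
      hence "{x} \<noteq> R" by auto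
      moreover have "ng S x \<notin> R" using False Rng' xc by auto
      ultimately show ?thesis using False by (simp add: cls_def F_def)
    qed
  qed
  have clsR: "cls x = R" if "x \<in> R" for x using that by (simp add: cls_def)
  have QF: "quasi_wajsberg_star F"
    unfolding quasi_wajsberg_star_def Let_def
  proof (intro conjI)
    show "closed_alg F" unfolding closed_alg_def carF
      using R1 clsR ngcls cl by (auto simp: impF plF miF unF intro!: image_eqI[where x = "unit S"])
    show "\<forall>x\<in>car F. \<forall>y\<in>car F. \<forall>z\<in>car F.
       imp F x y = imp F (ng F y) (ng F x) \<and>
       imp F (imp F x (unit F)) (imp F (imp F y (unit F)) z) =
       imp F (imp F y (unit F)) (imp F (imp F x (unit F)) z) \<and>
       imp F (imp F (unit F) x) (unit F) = unit F \<and>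
       imp F (imp F z z) (imp F x y) = imp F x y \<and>
       imp F (imp F (unit F) (unit F)) (pl F x) = pl F (imp F (imp F (unit F) (unit F)) x) \<and>
       pl F (imp F (imp F (unit F) (unit F)) x) = imp F (imp F x (unit F)) (unit F) \<and>
       imp F (imp F (unit F) (unit F)) (mi F x) = mi F (imp F (imp F (unit F) (unit F)) x) \<and>
       mi F (imp F (imp F (unit F) (unit F)) x) = imp F (imp F x (ng F (unit F))) (ng F (unit F)) \<and>
       imp F x y = imp F (imp F (pl F y) (mi F x)) (imp F (pl F x) (mi F y)) \<and>
       ng F (imp F x y) = imp F y x \<and>
       ng F (ng F x) = x \<and>
       pl F (imp F x (imp F (ng F x) y)) = imp F (pl F x) (imp F (ng F (pl F x)) (pl F y)) \<and>
       jn F x y = jn F y x \<and> jn F x (jn F y z) = jn F (jn F x y) z \<and>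
       imp F x (jn F y z) = jn F (imp F x y) (imp F x z)"
      unfolding carF
    proof (intro ballI, elim imageE, simp only: impF plF miF unF jnF ngR simp_thms)
      fix x assume "x \<in> car S"
      thus "ng F (ng F (cls x)) = cls x" using ngcls AX[of x x x] cl by simp
    qed
  qed
  have SF: "strong_qws F" using QF by (simp add: strong_qws_def plF miF impF)
  have FF: "flat_qws F" using QF by (simp add: flat_qws_def impF unF)
  have hom: "is_hom h S (prod_alg M F)"
    unfolding is_hom_def prod_alg_def
  proof (intro conjI ballI)
    fix x assume xc: "x \<in> car S"
    show "h x \<in> car \<lparr>car = car M \<times> car F, imp = \<lambda>(a, b) (c, d). (imp M a c, imp F b d),
      ng = \<lambda>(a, b). (ng M a, ng F b), pl = \<lambda>(a, b). (pl M a, pl F b),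
      mi = \<lambda>(a, b). (mi M a, mi F b), unit = (unit M, unit F)\<rparr>"
      using xc Rreg by (auto simp: h_def carM carF)
    show "h (ng S x) = ng \<lparr>car = car M \<times> car F, imp = \<lambda>(a, b) (c, d). (imp M a c, imp F b d),
      ng = \<lambda>(a, b). (ng M a, ng F b), pl = \<lambda>(a, b). (pl M a, pl F b),
      mi = \<lambda>(a, b). (mi M a, mi F b), unit = (unit M, unit F)\<rparr> (h x)"
      using xc D9 D10 ngcls by (simp add: h_def ngM)
    show "h (pl S x) = pl \<lparr>car = car M \<times> car F, imp = \<lambda>(a, b) (c, d). (imp M a c, imp F b d),
      ng = \<lambda>(a, b). (ng M a, ng F b), pl = \<lambda>(a, b). (pl M a, pl F b),
      mi = \<lambda>(a, b). (mi M a, mi F b), unit = (unit M, unit F)\<rparr> (h x)"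
      using xc D5 SP Rpl clsR by (simp add: h_def plM plF)
    show "h (mi S x) = mi \<lparr>car = car M \<times> car F, imp = \<lambda>(a, b) (c, d). (imp M a c, imp F b d),
      ng = \<lambda>(a, b). (ng M a, ng F b), pl = \<lambda>(a, b). (pl M a, pl F b),
      mi = \<lambda>(a, b). (mi M a, mi F b), unit = (unit M, unit F)\<rparr> (h x)"
      using xc D6 SM Rmi clsR by (simp add: h_def miM miF)
  next
    fix x y assume xc: "x \<in> car S" and yc: "y \<in> car S"
    show "h (imp S x y) = imp \<lparr>car = car M \<times> car F, imp = \<lambda>(a, b) (c, d). (imp M a c, imp F b d),
      ng = \<lambda>(a, b). (ng M a, ng F b), pl = \<lambda>(a, b). (pl M a, pl F b),
      mi = \<lambda>(a, b). (mi M a, mi F b), unit = (unit M, unit F)\<rparr> (h x) (h y)"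
      using xc yc D1 D7 Rimp clsR by (simp add: h_def impM impF)
  next
    show "h (unit S) = unit \<lparr>car = car M \<times> car F, imp = \<lambda>(a, b) (c, d). (imp M a c, imp F b d),
      ng = \<lambda>(a, b). (ng M a, ng F b), pl = \<lambda>(a, b). (pl M a, pl F b),
      mi = \<lambda>(a, b). (mi M a, mi F b), unit = (unit M, unit F)\<rparr>"
      using D2 R1 clsR by (simp add: h_def unM unF)
  qed
  have inj: "inj_on h (car S)"
  proof (rule inj_onI)
    fix x y assume xc: "x \<in> car S" and yc: "y \<in> car S" and e: "h x = h y"
    hence e1: "imp S cc x = imp S cc y" and e2: "cls x = cls y" by (auto simp: h_def)
    show "x = y"
    proof (cases "x \<in> R")
      case True
      hence "y \<in> R" using e2 by (auto simp: cls_def split: if_splits)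
      thus ?thesis using True e1 by (simp add: R_def)
    next
      case False
      hence "y \<notin> R" using e2 by (auto simp: cls_def split: if_splits)
      thus ?thesis using False e2 by (simp add: cls_def)
    qed
  qed
  show ?thesis using WM SF FF hom inj unfolding is_embedding_def by blast
qed

end

theorem corollary3p2:
  fixes S :: "'a qalg"
  assumes "strong_qws S"
  shows "\<exists>(M :: 'a set qalg) (F :: 'a set qalg) h.
           wajsberg_star M \<and> strong_qws F \<and> flat_qws F \<and>
           is_embedding h S (prod_alg M F)"
  using main[OF assms] .

end
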